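(* Let $p$ be a prime with $p\notin\{2,3,7,43\}$ such that none of the numbers $1+2p,\ 1+6p,\ 1+14p,\ 1+42p,\ 1+86p,\ 1+258p,\ 1+602p,\ 1+1806p$ is prime. Then $\mathcal{M}_p\subseteq\{1,2,6,42,1806\}\cup p\cdot\{1,2,6,42,1806\}$; in particular $\mathcal{M}_p$ is finite.
   Context: For positive integers $k,n$ let $S_k(n)=\sum_{i=1}^{n} i^k$. For an integer $a$, $\mathcal{M}_a$ denotes the set of positive integers $n$ such that $S_n(n)\equiv a\pmod{n}$. For a set $A$ of integers and an integer $c$, $c\cdot A=\{ca : a\in A\}$. *)

theory Defs
  imports Main "HOL-Computational_Algebra.Primes"
begin

definition S :: "nat \<Rightarrow> nat \<Rightarrow> int" where
  "S k n = (\<Sum>i=1..n. (int i) ^ k)"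

definition M :: "int \<Rightarrow> nat set" where
  "M a = {n. n > 0 \<and> S n n mod int n = a mod int n}"

definition scale_set :: "nat \<Rightarrow> nat set \<Rightarrow> nat set" where
  "scale_set c A = (\<lambda>a. c * a) ` A"

end

theory Submission
  imports Defs "HOL-Number_Theory.Number_Theory"
begin

lemma S_shift: "S k (n + d) = S k n + (\<Sum>b=1..d. (int (n + b))^k)"
proof (induction d)
  case 0 then show ?case by simp
next
  case (Suc d)
  have "S k (n + Suc d) = S k (n + d) + (int (n + Suc d))^k"
    unfolding S_def by (simp add: add_Suc_right)
  moreover have "(\<Sum>b=1..Suc d. (int (n + b))^k) = (\<Sum>b=1..d. (int (n + b))^k) + (int (n + Suc d))^k"
    by (rule sum.cl_ivl_Suc[THEN trans]) simp
  ultimately show ?case using Suc by simp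
qed

lemma S_block:
  assumes "\<And>c b. (m::int) dvd (int (c*d+b))^k - (int b)^k"
  shows "m dvd S k (c*d) - int c * S k d"
proof (induction c)
  case 0 then show ?case by (simp add: S_def)
next
  case (Suc c)
  have e: "S k (Suc c * d) = S k (c*d) + (\<Sum>b=1..d. (int (c*d + b))^k)"
    using S_shift[of k "c*d" d] by (simp add: add.commute)
  have "m dvd (\<Sum>b=1..d. (int (c*d + b))^k - (int b)^k)"
    by (rule dvd_sum) (use assms in auto)
  hence "m dvd (\<Sum>b=1..d. (int (c*d + b))^k) - S k d"
    by (simp add: sum_subtractf S_def)
  hence "m dvd (S k (c*d) - int c * S k d) + ((\<Sum>b=1..d. (int (c*d + b))^k) - S k d)"
    using Suc by (rule dvd_add[rotated])
  then show ?case using e by (simp add: algebra_simps)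
qed

lemma pow_diff_dvd1: "(x - y) dvd (x ^ k - y ^ k :: int)"
  by (simp add: power_diff_sumr2)

lemma mod1: "int q dvd (int (c*q+b))^k - (int b)^k"
proof -
  have "int (c*q+b) - int b = int q * int c" by simp
  then show ?thesis using pow_diff_dvd1[of "int (c*q+b)" "int b" k]
    by (metis dvd_mult_left)
qed

lemma mod2:
  assumes "q dvd k"
  shows "(int q)^2 dvd (int (c*q+b))^k - (int b)^k"
proof -
  define x where "x = int (c*q+b)"
  define y where "y = int b"
  have xy: "x - y = int q * int c" by (simp add: x_def y_def)
  have "int q dvd (\<Sum>i<k. y^(k - Suc i) * x^i - y^(k - 1))"
  proof (rule dvd_sum)
    fix i assume i: "i \<in> {..<k}"
    have "y^(k - Suc i) * x^i - y^(k-1) = y^(k - Suc i) * (x^i - y^i)"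
      using i by (simp add: algebra_simps flip: power_add)
    moreover have "int q dvd x^i - y^i" using pow_diff_dvd1[of x y i] xy
      by (metis dvd_mult_left dvd_trans)
    ultimately show "int q dvd y^(k - Suc i) * x^i - y^(k-1)" by simp
  qed
  hence "int q dvd (\<Sum>i<k. y^(k - Suc i) * x^i) - int k * y^(k-1)"
    by (simp add: sum_subtractf)
  moreover have "int q dvd int k * y^(k-1)" using assms by simp
  ultimately have "int q dvd ((\<Sum>i<k. y^(k - Suc i) * x^i) - int k * y^(k-1)) + int k * y^(k-1)"
    by (rule dvd_add)
  hence "int q dvd (\<Sum>i<k. y^(k - Suc i) * x^i)" by simp
  moreover have "int q dvd x - y" using xy by simp
  ultimately have "int q * int q dvd (x - y) * (\<Sum>i<k. y^(k - Suc i) * x^i)"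
    using mult_dvd_mono by (metis mult.commute)
  hence "int q * int q dvd x^k - y^k" by (simp only: power_diff_sumr2)
  thus ?thesis by (simp only: power2_eq_square x_def y_def)
qed

lemma S_nat: "S k n = int (\<Sum>i=1..n. i^k)"
  unfolding S_def by simp

lemma L2:
  assumes q: "prime q" and nd: "\<not> (q - 1) dvd k"
  shows "q dvd (\<Sum>i=1..q. i^k)"
proof -
  have q1: "q > 1" using q prime_gt_1_nat by blast
  obtain g where g: "residue_primroot q g" using prime_primitive_root_exists[OF q1 q] by blast
  have cop: "coprime q g" and og: "ord q g = q - 1"
    using g q by (auto simp: residue_primroot_def totient_prime)
  have ng: "\<not> [g^k = 1] (mod q)" using og nd ord_divides by metis
  define A where "A = {1..q-1}"
  define h where "h = (\<lambda>i. (g*i) mod q)"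
  have hA: "h ` A \<subseteq> A"
  proof
    fix y assume "y \<in> h ` A"
    then obtain i where i: "i \<in> A" "y = h i" by blast
    have "\<not> q dvd g" using coprime_common_divisor[OF cop dvd_refl] q1 by auto
    moreover have "\<not> q dvd i" using i q1 unfolding A_def by (auto dest: dvd_imp_le)
    ultimately have "\<not> q dvd g*i" using q by (simp add: prime_dvd_mult_iff)
    hence "y \<noteq> 0" using i by (simp add: h_def dvd_eq_mod_eq_0)
    moreover have "y < q" using i q1 by (simp add: h_def)
    ultimately show "y \<in> A" by (simp add: A_def)
  qed
  have inj: "inj_on h A"
  proof
    fix i j assume ij: "i \<in> A" "j \<in> A" "h i = h j"
    hence "[g*i = g*j] (mod q)" by (simp add: h_def cong_def)
    hence "[i = j] (mod q)" using cop by (simp add: cong_mult_lcancel_nat coprime_commute)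
    thus "i = j" using ij q1 unfolding A_def by (auto intro: cong_less_modulus_unique_nat)
  qed
  have bij: "bij_betw h A A"
    using endo_inj_surj[OF _ hA inj] inj by (simp add: A_def bij_betw_def)
  define T where "T = (\<Sum>i\<in>A. i^k)"
  have "(\<Sum>i\<in>A. (h i)^k) = T"
    unfolding T_def by (rule sum.reindex_bij_betw[OF bij])
  moreover have "[(\<Sum>i\<in>A. (g*i)^k) = (\<Sum>i\<in>A. (h i)^k)] (mod q)"
    by (rule cong_sum) (simp add: h_def cong_def power_mod)
  moreover have "(\<Sum>i\<in>A. (g*i)^k) = T * g^k"
    by (simp add: T_def sum_distrib_left power_mult_distrib mult_ac)
  ultimately have "[T * g^k = T * 1] (mod q)" by simp
  hence qT: "q dvd T"
  proof (cases "q dvd T")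
    case False
    hence "coprime T q" using q by (metis prime_imp_coprime coprime_commute)
    hence "[T * g^k = T * 1] (mod q) = [g^k = 1] (mod q)"
      by (rule cong_mult_lcancel_nat)
    hence "[g^k = 1] (mod q)" using \<open>[T * g^k = T * 1] (mod q)\<close> by blast
    with ng show ?thesis by simp
  qed
  have "{1..q} = insert q A" using q1 by (auto simp: A_def)
  hence "(\<Sum>i=1..q. i^k) = q^k + T" using q1 by (simp add: T_def A_def)
  moreover have "q dvd q^k" using nd by (cases k) auto
  ultimately show ?thesis using qT by simp
qed

lemma prime_dvd_cases: "prime (r::nat) \<Longrightarrow> d dvd r \<Longrightarrow> d = 1 \<or> d = r"
  by (simp add: prime_nat_iff)

lemma div1806: "(d::nat) dvd 1806 \<Longrightarrow> d \<in> {1,2,3,6,7,14,21,42,43,86,129,258,301,602,903,1806}"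
proof -
  assume "d dvd 1806"
  hence "d dvd 2 * (3 * (7 * 43))" by simp
  then obtain x y where d: "d = x*y" "x dvd 2" "y dvd 3 * (7*43)" by (rule dvd_productE)
  from d(3) obtain y1 y' where y: "y = y1 * y'" "y1 dvd 3" "y' dvd 7*43" by (rule dvd_productE)
  from y(3) obtain y2 y3 where y': "y' = y2 * y3" "y2 dvd 7" "y3 dvd 43" by (rule dvd_productE)
  have "x = 1 \<or> x = 2" using prime_dvd_cases[OF _ d(2)] by simp
  moreover have "y1 = 1 \<or> y1 = 3" using prime_dvd_cases[OF _ y(2)] by simp
  moreover have "y2 = 1 \<or> y2 = 7" using prime_dvd_cases[OF _ y'(2)] by simp
  moreover have "y3 = 1 \<or> y3 = 43" using prime_dvd_cases[OF _ y'(3)] by simp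
  ultimately show ?thesis using d y y' by auto
qed

lemma notprime: "a dvd x \<Longrightarrow> 1 < a \<Longrightarrow> a < x \<Longrightarrow> \<not> prime (x::nat)"
  by (auto simp: prime_nat_iff)

lemma primeG: "prime (x::nat) \<Longrightarrow> (x - 1) dvd 1806 \<Longrightarrow> x \<in> {2,3,7,43}"
proof -
  assume p: "prime x" and d: "(x - 1) dvd 1806"
  have x2: "x \<ge> 2" using p prime_ge_2_nat by blast
  have "x - 1 \<in> {1,2,3,6,7,14,21,42,43,86,129,258,301,602,903,1806}" using div1806[OF d] .
  moreover obtain y where y: "x = Suc y" using x2 by (cases x) auto
  ultimately have "y \<in> {1,2,3,6,7,14,21,42,43,86,129,258,301,602,903,1806}" by simp
  hence "x \<in> {2,3,4,7,8,15,22,43,44,87,130,259,302,603,904,1807}" using y by auto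
  moreover have "\<not> prime (4::nat)" by (rule notprime[of 2]) auto
  moreover have "\<not> prime (8::nat)" by (rule notprime[of 2]) auto
  moreover have "\<not> prime (15::nat)" by (rule notprime[of 3]) auto
  moreover have "\<not> prime (22::nat)" by (rule notprime[of 2]) auto
  moreover have "\<not> prime (44::nat)" by (rule notprime[of 2]) auto
  moreover have "\<not> prime (87::nat)" by (rule notprime[of 3]) auto
  moreover have "\<not> prime (130::nat)" by (rule notprime[of 2]) auto
  moreover have "\<not> prime (259::nat)" by (rule notprime[of 7]) auto
  moreover have "\<not> prime (302::nat)" by (rule notprime[of 2]) auto
  moreover have "\<not> prime (603::nat)" by (rule notprime[of 3]) auto
  moreover have "\<not> prime (904::nat)" by (rule notprime[of 2]) auto
  moreover have "\<not> prime (1807::nat)" by (rule notprime[of 13]) auto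
  ultimately show ?thesis using p by blast
qed

lemma lemD:
  "(g::nat) > 0 \<Longrightarrow> (\<forall>r. prime r \<longrightarrow> r dvd g \<longrightarrow> r \<in> {2,3,7,43} \<and> \<not> r^2 dvd g) \<Longrightarrow> g dvd 1806"
proof (induction g rule: less_induct)
  case (less g)
  show ?case
  proof (cases "g = 1")
    case True then show ?thesis by simp
  next
    case False
    then obtain r where r: "prime r" "r dvd g" using prime_factor_nat by blast
    then obtain g' where g': "g = r * g'" by blast
    have rG: "r \<in> {2,3,7,43}" and nr2: "\<not> r^2 dvd g" using less.prems r by auto
    have ndg: "\<not> r dvd g'"
    proof
      assume "r dvd g'"
      hence "r * r dvd g" using g' by simp
      thus False using nr2 by (simp add: power2_eq_square)
    qed
    have r1: "r > 1" using r prime_gt_1_nat by blast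
    have g'pos: "g' > 0" using less.prems g' by (cases "g' = 0") auto
    have lt: "g' < g" using g' r1 g'pos by simp
    have "\<forall>s. prime s \<longrightarrow> s dvd g' \<longrightarrow> s \<in> {2,3,7,43} \<and> \<not> s^2 dvd g'"
    proof (intro allI impI)
      fix s assume s: "prime s" "s dvd g'"
      have "s dvd g" using s g' by simp
      moreover have "\<not> s^2 dvd g'" 
      proof
        assume "s^2 dvd g'" hence "s^2 dvd g" using g' by simp
        thus False using less.prems s \<open>s dvd g\<close> by auto
      qed
      ultimately show "s \<in> {2,3,7,43} \<and> \<not> s^2 dvd g'" using less.prems s by auto
    qed
    hence "g' dvd 1806" using less.IH[OF lt g'pos] by blast
    moreover have "r dvd 1806" using rG by auto
    moreover have "coprime r g'" using r ndg by (simp add: prime_imp_coprime)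
    ultimately show ?thesis using g' by (simp add: divides_mult)
  qed
qed

lemma closure16:
  assumes "(m::nat) dvd 1806"
    and "3 dvd m \<Longrightarrow> 2 dvd m"
    and "7 dvd m \<Longrightarrow> 2 dvd m \<and> 3 dvd m"
    and "43 dvd m \<Longrightarrow> 2 dvd m \<and> 3 dvd m \<and> 7 dvd m"
  shows "m \<in> {1,2,6,42,1806}"
  using div1806[OF assms(1)] assms(2-4) by auto

lemma PP:
  fixes p n :: nat
  assumes p: "prime p" "p \<notin> {2,3,7,43}"
    and Hq: "\<forall>q. prime q \<longrightarrow> q dvd n \<longrightarrow> q \<noteq> p \<longrightarrow> \<not> q^2 dvd n \<and> (q - 1) dvd n"
    and Hp: "p^2 dvd n \<longrightarrow> (p - 1) dvd n"
    and IH: "\<And>r. prime r \<Longrightarrow> r dvd n \<Longrightarrow> r \<noteq> p \<Longrightarrow> r < p \<Longrightarrow> r \<in> {2,3,7,43}"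
  shows "\<not> p^2 dvd n"
proof
  assume "p^2 dvd n"
  hence d: "(p - 1) dvd n" using Hp by simp
  have p1: "p > 1" using p prime_gt_1_nat by blast
  have "(p - 1) dvd 1806"
  proof (rule lemD)
    show "p - 1 > 0" using p1 by simp
    show "\<forall>r. prime r \<longrightarrow> r dvd p - 1 \<longrightarrow> r \<in> {2, 3, 7, 43} \<and> \<not> r\<^sup>2 dvd p - 1"
    proof (intro allI impI)
      fix r assume r: "prime r" "r dvd p - 1"
      have rl: "r < p" using r p1 dvd_imp_le[of r "p-1"] by simp
      have rn: "r dvd n" using r d dvd_trans by blast
      have "\<not> r^2 dvd p - 1"
      proof
        assume "r^2 dvd p - 1" hence "r^2 dvd n" using d dvd_trans by blast
        thus False using Hq r rn rl by auto
      qed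
      thus "r \<in> {2, 3, 7, 43} \<and> \<not> r\<^sup>2 dvd p - 1" using IH[OF r(1) rn] rl by auto
    qed
  qed
  thus False using primeG[OF p(1)] p(2) by blast
qed

lemma comb:
  fixes p n :: nat
  assumes p: "prime p" "p \<notin> {2,3,7,43}"
    and hyp: "\<forall>m\<in>{2, 6, 14, 42, 86, 258, 602, 1806::nat}. \<not> prime (1 + m * p)"
    and n0: "n > 0"
    and Hq: "\<forall>q. prime q \<longrightarrow> q dvd n \<longrightarrow> q \<noteq> p \<longrightarrow> \<not> q^2 dvd n \<and> (q - 1) dvd n"
    and Hp: "p^2 dvd n \<longrightarrow> (p - 1) dvd n"
  shows "n \<in> {1, 2, 6, 42, 1806} \<union> scale_set p {1, 2, 6, 42, 1806}"
proof -
  have p1: "p > 1" using p prime_gt_1_nat by blast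
  have "p > 2" using p(2) p1 by auto
  hence podd: "odd p" using p prime_odd_nat by auto
  have claimA: "\<And>q. prime q \<Longrightarrow> q dvd n \<Longrightarrow> q \<noteq> p \<Longrightarrow> q \<in> {2,3,7,43}"
  proof -
    fix q0 :: nat
    show "prime q0 \<Longrightarrow> q0 dvd n \<Longrightarrow> q0 \<noteq> p \<Longrightarrow> q0 \<in> {2,3,7,43}"
    proof (induction q0 rule: less_induct)
      case (less q)
      show ?case
      proof (rule ccontr)
        assume qG: "q \<notin> {2,3,7,43}"
        have q1: "q > 2" using less.prems qG prime_ge_2_nat[of q] by fastforce
        have dq: "(q - 1) dvd n" using Hq less.prems by blast
        have sqf: "\<And>g. g dvd q - 1 \<Longrightarrow> \<not> p dvd g \<Longrightarrow> g dvd 1806"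
        proof -
          fix g assume g: "g dvd q - 1" "\<not> p dvd g"
          have gn: "g dvd n" using g dq dvd_trans by blast
          show "g dvd 1806"
          proof (rule lemD)
            show "g > 0" using g q1 by (cases "g = 0") auto
            show "\<forall>r. prime r \<longrightarrow> r dvd g \<longrightarrow> r \<in> {2, 3, 7, 43} \<and> \<not> r\<^sup>2 dvd g"
            proof (intro allI impI)
              fix r assume r: "prime r" "r dvd g"
              have rp: "r \<noteq> p" using r g by auto
              have rl: "r < q" using r g q1 dvd_imp_le[of r "q-1"] dvd_trans[of r g "q-1"] by simp
              have rn: "r dvd n" using r gn dvd_trans by blast
              have "\<not> r^2 dvd g"
              proof
                assume "r^2 dvd g" hence "r^2 dvd n" using gn dvd_trans by blast
                thus False using Hq r rn rp by auto
              qed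
              thus "r \<in> {2, 3, 7, 43} \<and> \<not> r\<^sup>2 dvd g" using less.IH[OF rl r(1) rn rp] by auto
            qed
          qed
        qed
        show False
        proof (cases "p dvd q - 1")
          case False
          have "(q - 1) dvd 1806" by (rule sqf[OF dvd_refl False])
          hence "q \<in> {2,3,7,43}" by (rule primeG[OF less.prems(1)])
          with qG show False by simp
        next
          case True
          then obtain g where g: "q - 1 = p * g" by blast
          show False
          proof (cases "p dvd g")
            case True
            hence "p^2 dvd q - 1" using g by (auto simp: power2_eq_square)
            hence pn: "p^2 dvd n" using dq dvd_trans by blast
            have "p^2 \<le> q - 1" using dvd_imp_le[OF \<open>p^2 dvd q - 1\<close>] q1 by simp
            moreover have "p < p^2" using p1 by (simp add: power2_eq_square)
            ultimately have plq: "p < q" by simp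
            have "\<not> p^2 dvd n"
              by (rule PP[OF p Hq Hp]) (use less.IH plq in auto)
            with pn show False by simp
          next
            case False
            have gd: "g dvd 1806" using sqf[of g] g False by simp
            have "q = Suc (q - 1)" using q1 by simp
            also have "\<dots> = 1 + g * p" using g by (simp add: mult.commute)
            finally have q: "q = 1 + g * p" .
            show False
            proof (cases "even g")
              case True
              hence "g \<in> {2, 6, 14, 42, 86, 258, 602, 1806}" using div1806[OF gd] by auto
              thus False using hyp q less.prems by auto
            next
              case False
              hence "even q" using q podd by simp
              thus False using less.prems(1) prime_odd_nat[of q] q1 by simp
            qed
          qed
        qed
      qed
    qed
  qed
  have np2: "\<not> p^2 dvd n" by (rule PP[OF p Hq Hp]) (use claimA in auto)
  define m where "m = (if p dvd n then n div p else n)"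
  have nm: "n = m \<or> n = p * m" by (auto simp: m_def)
  have mn: "m dvd n" using nm by auto
  have m0: "m > 0" using nm n0 by auto
  have npm: "\<not> p dvd m"
  proof
    assume "p dvd m"
    show False
    proof (cases "p dvd n")
      case True
      hence "n = p * m" by (simp add: m_def)
      hence "p^2 dvd n" using \<open>p dvd m\<close> by (auto simp: power2_eq_square)
      thus False using np2 by simp
    next
      case False thus False using \<open>p dvd m\<close> by (simp add: m_def)
    qed
  qed
  have transfer: "\<And>r. prime r \<Longrightarrow> r \<noteq> p \<Longrightarrow> r dvd n \<Longrightarrow> r dvd m"
  proof -
    fix r assume r: "prime r" "r \<noteq> p" "r dvd n"
    show "r dvd m"
    proof (cases "n = m")
      case True thus ?thesis using r by simp
    next
      case False
      hence "n = p * m" using nm by simp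
      hence "r dvd p \<or> r dvd m" using r prime_dvd_mult_iff by metis
      moreover have "\<not> r dvd p" using r p by (metis primes_dvd_imp_eq)
      ultimately show ?thesis by simp
    qed
  qed
  have "m dvd 1806"
  proof (rule lemD[OF m0], intro allI impI)
    fix r assume r: "prime r" "r dvd m"
    have rn: "r dvd n" using r mn dvd_trans by blast
    have rp: "r \<noteq> p" using r npm by auto
    have "\<not> r^2 dvd m"
    proof
      assume "r^2 dvd m" hence "r^2 dvd n" using mn dvd_trans by blast
      thus False using Hq r rn rp by auto
    qed
    thus "r \<in> {2, 3, 7, 43} \<and> \<not> r\<^sup>2 dvd m" using claimA[OF r(1) rn rp] by auto
  qed
  moreover have pne: "2 \<noteq> p" "3 \<noteq> p" "7 \<noteq> p" using p(2) by auto
  have sub: "\<And>q. prime q \<Longrightarrow> q dvd m \<Longrightarrow> (q - 1) dvd n"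
  proof -
    fix q assume q: "prime q" "q dvd m"
    have "q dvd n" using q mn dvd_trans by blast
    moreover have "q \<noteq> p" using q npm by auto
    ultimately show "(q - 1) dvd n" using Hq q by blast
  qed
  have t2: "2 dvd n \<Longrightarrow> 2 dvd m" using transfer[of 2] pne by simp
  have t3: "3 dvd n \<Longrightarrow> 3 dvd m" using transfer[of 3] pne by simp
  have t7: "7 dvd n \<Longrightarrow> 7 dvd m" using transfer[of 7] pne by simp
  have "3 dvd m \<Longrightarrow> 2 dvd m" using sub[of 3] t2 by simp
  moreover have "7 dvd m \<Longrightarrow> 2 dvd m \<and> 3 dvd m"
  proof -
    assume "7 dvd m"
    hence "6 dvd n" using sub[of 7] by simp
    hence "2 dvd n" "3 dvd n" by (auto intro: dvd_trans[of _ 6])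
    thus ?thesis using t2 t3 by simp
  qed
  moreover have "43 dvd m \<Longrightarrow> 2 dvd m \<and> 3 dvd m \<and> 7 dvd m"
  proof -
    assume "43 dvd m"
    moreover have "prime (43::nat)" unfolding prime_nat_iff' by (simp add: set_upt[symmetric] upt_rec)
    ultimately have "42 dvd n" using sub[of 43] by simp
    hence "2 dvd n" "3 dvd n" "7 dvd n" by (auto intro: dvd_trans[of _ 42])
    thus ?thesis using t2 t3 t7 by simp
  qed
  ultimately have "m \<in> {1,2,6,42,1806}" using closure16 by blast
  thus ?thesis using nm unfolding scale_set_def by auto
qed

lemma Kq:
  assumes q: "prime q" and qn: "q dvd n" and c: "q^2 dvd n \<or> \<not> (q - 1) dvd n"
  shows "int q dvd S n n"
proof -
  obtain c where nc: "n = c * q" using qn by (metis dvd_def mult.commute)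
  have b: "int q dvd S n (c*q) - int c * S n q"
    by (rule S_block) (rule mod1)
  have q0: "q > 0" using q prime_gt_0_nat by blast
  have "int q dvd int c * S n q"
  proof (cases "q^2 dvd n")
    case True
    hence "q * q dvd c * q" using nc by (simp add: power2_eq_square)
    hence "q dvd c" using q0 by simp
    thus ?thesis by simp
  next
    case False
    hence "\<not> (q - 1) dvd n" using c by simp
    hence "q dvd (\<Sum>i=1..q. i^n)" using L2[OF q] by blast
    hence "int q dvd S n q" by (simp only: S_nat int_dvd_int_iff)
    thus ?thesis by simp
  qed
  hence "int q dvd (S n (c*q) - int c * S n q) + int c * S n q" using b by (rule dvd_add[rotated])
  thus ?thesis using nc by simp
qed

lemma Kp:
  assumes q: "prime q" and qn: "q^2 dvd n" and c: "\<not> (q - 1) dvd n"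
  shows "(int q)^2 dvd S n n"
proof -
  have q0: "q > 0" using q prime_gt_0_nat by blast
  have qn1: "q dvd n" using qn by (metis dvd_mult_left power2_eq_square)
  obtain c where nc: "n = c * q" using qn1 by (metis dvd_def mult.commute)
  have b: "(int q)^2 dvd S n (c*q) - int c * S n q"
    by (rule S_block) (rule mod2[OF qn1])
  have "q * q dvd c * q" using nc qn by (simp add: power2_eq_square)
  hence "q dvd c" using q0 by simp
  hence 1: "int q dvd int c" by simp
  have "q dvd (\<Sum>i=1..q. i^n)" using L2[OF q c] by blast
  hence 2: "int q dvd S n q" by (simp only: S_nat int_dvd_int_iff)
  have "(int q)^2 dvd int c * S n q" using mult_dvd_mono[OF 1 2] by (simp add: power2_eq_square)
  hence "(int q)^2 dvd (S n (c*q) - int c * S n q) + int c * S n q" using b by (rule dvd_add[rotated])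
  thus ?thesis using nc by simp
qed

theorem mainTheorem12:
  fixes p :: nat
  assumes "prime p"
    and "p \<notin> {2, 3, 7, 43}"
    and "\<forall>m\<in>{2, 6, 14, 42, 86, 258, 602, 1806::nat}. \<not> prime (1 + m * p)"
  shows "M (int p) \<subseteq> {1, 2, 6, 42, 1806} \<union> scale_set p {1, 2, 6, 42, 1806}
         \<and> finite (M (int p))"
proof -
  have sub: "M (int p) \<subseteq> {1, 2, 6, 42, 1806} \<union> scale_set p {1, 2, 6, 42, 1806}"
  proof
    fix n assume "n \<in> M (int p)"
    hence n0: "n > 0" and e: "S n n mod int n = int p mod int n" by (auto simp: M_def)
    have dn: "int n dvd S n n - int p" using e by (simp add: mod_eq_dvd_iff)
    have p1: "p > 1" using assms(1) prime_gt_1_nat by blast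
    have Hq: "\<forall>q. prime q \<longrightarrow> q dvd n \<longrightarrow> q \<noteq> p \<longrightarrow> \<not> q^2 dvd n \<and> (q - 1) dvd n"
    proof (intro allI impI)
      fix q assume q: "prime q" "q dvd n" "q \<noteq> p"
      show "\<not> q^2 dvd n \<and> (q - 1) dvd n"
      proof (rule ccontr)
        assume "\<not> (\<not> q^2 dvd n \<and> (q - 1) dvd n)"
        hence "int q dvd S n n" using Kq[OF q(1,2)] by blast
        moreover have "int q dvd int n" using q(2) by (simp only: int_dvd_int_iff)
        hence "int q dvd S n n - int p" using dn by (rule dvd_trans)
        ultimately have "int q dvd S n n - (S n n - int p)" by (rule dvd_diff)
        hence "int q dvd int p" by simp
        hence "q dvd p" by (simp only: int_dvd_int_iff)
        thus False using q(1,3) assms(1) primes_dvd_imp_eq by blast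
      qed
    qed
    have Hp: "p^2 dvd n \<longrightarrow> (p - 1) dvd n"
    proof
      assume pn: "p^2 dvd n"
      show "(p - 1) dvd n"
      proof (rule ccontr)
        assume "\<not> (p - 1) dvd n"
        hence "(int p)^2 dvd S n n" using Kp[OF assms(1) pn] by blast
        moreover have "int (p^2) dvd int n" using pn by (simp only: int_dvd_int_iff)
        hence "(int p)^2 dvd int n" by simp
        hence "(int p)^2 dvd S n n - int p" using dn by (rule dvd_trans)
        ultimately have "(int p)^2 dvd S n n - (S n n - int p)" by (rule dvd_diff)
        hence "(int p)^2 dvd int p" by simp
        hence "int (p^2) dvd int p" by simp
        hence "p^2 dvd p" by (simp only: int_dvd_int_iff)
        hence "p^2 \<le> p" using p1 by (simp add: dvd_imp_le)
        thus False using p1 by (simp add: power2_eq_square)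
      qed
    qed
    show "n \<in> {1, 2, 6, 42, 1806} \<union> scale_set p {1, 2, 6, 42, 1806}"
      by (rule comb[OF assms(1,2,3) n0 Hq Hp])
  qed
  moreover have "finite ({1, 2, 6, 42, 1806} \<union> scale_set p {1, 2, 6, 42, 1806})"
    by (simp add: scale_set_def)
  ultimately show ?thesis using finite_subset by blast
qed

end
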